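(* Let $C$ be an $(n,k)$-code with generator matrix $G$ and let $A_1,\dots,A_\ell\subseteq[n]$. For all $B\subseteq\bar A_1\cup\dots\cup\bar A_\ell$, $\operatorname{rank}\mathcal H_{A_1,\dots,A_\ell}[G]\ge|B|+\operatorname{rank}\mathcal H_{A_1\setminus B,\dots,A_\ell\setminus B}[G|_{\bar B}]$, where in the second term the column index set is $[n]\setminus B$ (so complements are taken in $[n]\setminus B$).
   Context: For a $k\times N$ matrix $G$ with columns indexed by a set $U$, $A\subseteq U$, $G|_A$ is the submatrix of columns in $A$ and $\bar A=U\setminus A$. $\mathcal H_{A_1,\dots,A_\ell}[G]$ is the $(|U|+\ell k)\times\sum_i|\bar A_i|$ block matrix whose first block row is $(I_U|_{\bar A_1},\dots,I_U|_{\bar A_\ell})$ ($I_U$ the identity matrix indexed by $U$) and below which is the block-diagonal matrix $\operatorname{diag}(G|_{\bar A_1},\dots,G|_{\bar A_\ell})$. *)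

theory Defs
  imports "Jordan_Normal_Form.DL_Rank"
begin

abbreviation mrank :: "'a::field mat \<Rightarrow> nat" where
  "mrank M \<equiv> vec_space.rank (dim_row M) M"

text \<open>The column labels of the block matrix H: block i (i < length As) consists of the
  columns of I_U and G restricted to the complement U - As!i (taken inside the column
  index set U), in increasing order of labels.\<close>
definition H_cols :: "nat set \<Rightarrow> nat set list \<Rightarrow> (nat \<times> nat) list" where
  "H_cols U As = concat (map (\<lambda>i. map (\<lambda>u. (i, u)) (sorted_list_of_set (U - As ! i)))
                              [0..<length As])"

text \<open>H_{A_1,...,A_l}[G|_U]: G is a k x n matrix whose columns are labelled 0..n-1;
  U (a subset of {0..<n}) is the column index set of the matrix under consideration,
  i.e. the matrix is G|_U with columns indexed by U.  Rows: first |U| rows are the rows of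
  the identity I_U (labelled by the elements of U in increasing order), then l blocks
  of k rows, block b carrying G|_{U - A_b} in the columns of block b and 0 elsewhere.\<close>
definition Hmat :: "'a::field mat \<Rightarrow> nat set \<Rightarrow> nat set list \<Rightarrow> 'a mat" where
  "Hmat G U As =
     (let k = dim_row G; cs = H_cols U As; us = sorted_list_of_set U in
      mat (card U + length As * k) (length cs)
        (\<lambda>(r, c). let (i, u) = cs ! c in
           if r < card U then (if us ! r = u then 1 else 0)
           else (let r' = r - card U in
                 if r' div k = i then G $$ (r' mod k, u) else 0)))"

end

theory Submission
  imports Defs
begin

lemma (in vec_space) rank_witness:
  assumes A: "A \<in> carrier_mat n nc"
  shows "\<exists>S. S \<subseteq> set (cols A) \<and> finite S \<and> lin_indpt S \<and> card S = rank A"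
proof -
  obtain S where S: "maximal S (\<lambda>T. T \<subseteq> set (cols A) \<and> lin_indpt T)"
    using maximal_exists[of "(\<lambda>T. T \<subseteq> set (cols A) \<and> lin_indpt T)" "card (set (cols A))" "{}"]
    by (meson List.finite_set card_mono empty_iff empty_subsetI finite_lin_indpt2 rev_finite_subset)
  have "rank A = card S" using rank_card_indpt[OF A S] .
  moreover have "S \<subseteq> set (cols A)" "lin_indpt S" using S by (auto simp: maximal_def)
  ultimately show ?thesis using finite_subset[of S "set (cols A)"] by auto
qed

lemma abstract_rank:
  fixes A A' :: "'a::field mat"
  assumes A: "A \<in> carrier_mat n nc" and A': "A' \<in> carrier_mat n' nc'"
  and Bn: "B \<subseteq> {..<n}" and rho: "\<forall>r<n'. \<rho> r < n"
  and F1: "\<forall>s\<in>set (cols A'). \<exists>x\<in>set (cols A). (\<forall>b\<in>B. x$b = 0) \<and> (\<forall>r<n'. x $ \<rho> r = s $ r)"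
  and F2: "\<forall>b\<in>B. \<exists>x\<in>set (cols A). x$b = 1 \<and> (\<forall>b'\<in>B. b' \<noteq> b \<longrightarrow> x$b' = 0)"
  shows "card B + vec_space.rank n' A' \<le> vec_space.rank n A"
proof -
  interpret V: vec_space "TYPE('a)" n .
  interpret V': vec_space "TYPE('a)" n' .
  have "\<exists>S. S \<subseteq> set (cols A') \<and> finite S \<and> V'.lin_indpt S \<and> card S = V'.rank A'"
    by (rule V'.rank_witness[OF A'])
  then obtain S' where S': "S' \<subseteq> set (cols A')" "finite S'" "V'.lin_indpt S'" "card S' = V'.rank A'"
    by (elim exE conjE) 
  define P1 where "P1 s x \<longleftrightarrow> x\<in>set (cols A) \<and> (\<forall>b\<in>B. x$b = 0) \<and> (\<forall>r<n'. x $ \<rho> r = s $ r)" for s x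
  define P2 where "P2 b x \<longleftrightarrow> x\<in>set (cols A) \<and> x$b = 1 \<and> (\<forall>b'\<in>B. b' \<noteq> b \<longrightarrow> x$b' = 0)" for b x
  define lift where "lift s = (SOME x. P1 s x)" for s
  define e where "e b = (SOME x. P2 b x)" for b
  have lift0: "P1 s (lift s)" if "s \<in> S'" for s
  proof -
    have "s \<in> set (cols A')" using S'(1) that by (rule subsetD)
    with F1 have "\<exists>x\<in>set (cols A). (\<forall>b\<in>B. x$b = 0) \<and> (\<forall>r<n'. x $ \<rho> r = s $ r)" by (rule bspec)
    then obtain x where "x\<in>set (cols A)" "(\<forall>b\<in>B. x$b = 0) \<and> (\<forall>r<n'. x $ \<rho> r = s $ r)" by (rule bexE)
    then have "P1 s x" unfolding P1_def by simp
    then show ?thesis unfolding lift_def by (rule someI)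
  qed
  have e0: "P2 b (e b)" if "b \<in> B" for b
  proof -
    from F2 that have "\<exists>x\<in>set (cols A). x$b = 1 \<and> (\<forall>b'\<in>B. b' \<noteq> b \<longrightarrow> x$b' = 0)" by (rule bspec)
    then obtain x where "x\<in>set (cols A)" "x$b = 1 \<and> (\<forall>b'\<in>B. b' \<noteq> b \<longrightarrow> x$b' = 0)" by (rule bexE)
    then have "P2 b x" unfolding P2_def by simp
    then show ?thesis unfolding e_def by (rule someI)
  qed
  have lift: "lift s\<in>set (cols A) \<and> (\<forall>b\<in>B. lift s$b = 0) \<and> (\<forall>r<n'. lift s $ \<rho> r = s $ r)" if "s \<in> S'" for s
    using lift0[OF that] unfolding P1_def .
  have e: "e b\<in>set (cols A) \<and> e b$b = 1 \<and> (\<forall>b'\<in>B. b' \<noteq> b \<longrightarrow> e b$b' = 0)" if "b \<in> B" for b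
    using e0[OF that] unfolding P2_def .
  have S'dim: "s \<in> carrier_vec n'" if "s \<in> S'" for s
    using subsetD[OF cols_dim subsetD[OF S'(1) that]] A' by simp
  have inj_lift: "inj_on lift S'"
  proof (rule inj_onI)
    fix s t assume st: "s \<in> S'" "t \<in> S'" "lift s = lift t"
    show "s = t"
    proof (rule eq_vecI)
      show "dim_vec s = dim_vec t" using carrier_vecD[OF S'dim[OF st(1)]] carrier_vecD[OF S'dim[OF st(2)]] by (rule trans[OF _ sym])
      fix r assume "r < dim_vec t"
      then have "r < n'" using carrier_vecD[OF S'dim[OF st(2)]] by simp
      note r = this
      have 1: "\<forall>r<n'. lift s $ \<rho> r = s $ r" using lift[OF st(1)] by (elim conjE)
      have 2: "\<forall>r<n'. lift t $ \<rho> r = t $ r" using lift[OF st(2)] by (elim conjE)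
      have "s $ r = lift s $ \<rho> r" using 1 r by simp
      also have "\<dots> = lift t $ \<rho> r" by (simp only: st(3))
      also have "\<dots> = t $ r" using 2 r by simp
      finally show "s $ r = t $ r" .
    qed
  qed
  have inj_e: "inj_on e B"
  proof (rule inj_onI)
    fix b b' assume bb: "b \<in> B" "b' \<in> B" "e b = e b'"
    show "b = b'"
    proof (rule ccontr)
      assume "b \<noteq> b'"
      then have "e b' $ b = 0" using e[OF bb(2)] bb(1) by simp
      moreover have "e b $ b = 1" using e[OF bb(1)] by simp
      ultimately show False using bb(3) by simp
    qed
  qed
  have disj: "lift ` S' \<inter> e ` B = {}"
  proof (rule ccontr)
    assume "lift ` S' \<inter> e ` B \<noteq> {}"
    then obtain s b where sb: "s \<in> S'" "b \<in> B" "lift s = e b" by blast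
    have "lift s $ b = 0" using lift[OF sb(1)] sb(2) by simp
    moreover have "e b $ b = 1" using e[OF sb(2)] by simp
    ultimately show False using sb(3) by simp
  qed
  have finB: "finite B" using Bn finite_subset by blast
  define T where "T = lift ` S' \<union> e ` B"
  have cardT: "card T = card S' + card B"
    unfolding T_def using card_Un_disjoint[OF _ _ disj] S'(2) finB
      card_image[OF inj_lift] card_image[OF inj_e] by simp
  have Tsub: "T \<subseteq> set (cols A)" unfolding T_def using lift e by blast
  have Tdim: "T \<subseteq> carrier_vec n" using subset_trans[OF Tsub cols_dim] A by simp
  have indT: "V.lin_indpt T"
  proof
    assume "V.lin_dep T"
    then obtain X a v where X: "finite X" "X \<subseteq> T" "V.lincomb a X = 0\<^sub>v n" "v \<in> X" "a v \<noteq> 0"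
      unfolding V.lin_dep_def by auto
    have Xdim: "X \<subseteq> carrier_vec n" using X(2) Tdim by blast
    have ae: "a (e b) = 0" if b: "b \<in> B" "e b \<in> X" for b
    proof -
      have bn: "b < n" using Bn b by auto
      have "0 = V.lincomb a X $ b" using X(3) bn by simp
      also have "\<dots> = (\<Sum>x\<in>X. a x * x $ b)" by (rule V.lincomb_index[OF bn Xdim])
      also have "\<dots> = (\<Sum>x\<in>X. if x = e b then a x else 0)"
      proof (rule sum.cong[OF refl])
        fix x assume x: "x \<in> X"
        show "a x * x $ b = (if x = e b then a x else 0)"
        proof (cases "x = e b")
          case True then show ?thesis using e[OF b(1)] by simp
        next
          case False
          from x X(2) have "x \<in> lift ` S' \<or> x \<in> e ` B" unfolding T_def by blast
          then have "x $ b = 0"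
          proof
            assume "x \<in> lift ` S'"
            then obtain s where "s \<in> S'" "x = lift s" by blast
            then show ?thesis using lift b(1) by blast
          next
            assume "x \<in> e ` B"
            then obtain b' where "b' \<in> B" "x = e b'" by blast
            moreover have "b \<noteq> b'" using False \<open>x = e b'\<close> by blast
            ultimately show ?thesis using e[of b'] b(1) by blast
          qed
          then show ?thesis using False by simp
        qed
      qed
      also have "\<dots> = a (e b)" using X(1) b(2) by (simp add: sum.delta)
      finally show ?thesis by simp
    qed
    have "v \<notin> e ` B" using ae X(4,5) by blast
    then obtain s0 where s0: "s0 \<in> S'" "v = lift s0" using X(2,4) unfolding T_def by blast
    define X' where "X' = {s \<in> S'. lift s \<in> X}"
    have X'sub: "X' \<subseteq> S'" unfolding X'_def by blast
    have finX': "finite X'" using S'(2) X'sub finite_subset by blast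
    have X'dim: "X' \<subseteq> carrier_vec n'" using X'sub S'dim by blast
    have "V'.lincomb (\<lambda>s. a (lift s)) X' = 0\<^sub>v n'"
    proof (rule eq_vecI)
      show "dim_vec (V'.lincomb (\<lambda>s. a (lift s)) X') = dim_vec (0\<^sub>v n')"
        using V'.lincomb_dim[OF finX' X'dim] by simp
      fix r assume "r < dim_vec (0\<^sub>v n')"
      then have r: "r < n'" by simp
      have "V'.lincomb (\<lambda>s. a (lift s)) X' $ r = (\<Sum>s\<in>X'. a (lift s) * s $ r)"
        by (rule V'.lincomb_index[OF r X'dim])
      also have "\<dots> = (\<Sum>s\<in>X'. a (lift s) * lift s $ \<rho> r)"
      proof (rule sum.cong[OF refl])
        fix s assume "s \<in> X'"
        then have "s \<in> S'" using X'sub by blast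
        then have "lift s $ \<rho> r = s $ r" using lift r by blast
        then show "a (lift s) * s $ r = a (lift s) * lift s $ \<rho> r" by simp
      qed
      also have "\<dots> = (\<Sum>x\<in>lift ` X'. a x * x $ \<rho> r)"
        using sum.reindex[OF inj_on_subset[OF inj_lift X'sub], of "\<lambda>x. a x * x $ \<rho> r"] by simp
      also have "\<dots> = (\<Sum>x\<in>X. a x * x $ \<rho> r)"
      proof (rule sum.mono_neutral_left[OF X(1)])
        show "lift ` X' \<subseteq> X" unfolding X'_def by blast
        show "\<forall>i\<in>X - lift ` X'. a i * i $ \<rho> r = 0"
        proof
          fix x assume x: "x \<in> X - lift ` X'"
          then have "x \<in> e ` B" using X(2) unfolding T_def X'_def by blast
          then obtain b where b: "b \<in> B" "x = e b" by blast
          then have "a x = 0" using ae x by blast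
          then show "a x * x $ \<rho> r = 0" by simp
        qed
      qed
      also have "\<dots> = V.lincomb a X $ \<rho> r"
        by (rule V.lincomb_index[symmetric, OF _ Xdim]) (use rho r in blast)
      also have "\<dots> = 0" using X(3) rho r by simp
      finally show "V'.lincomb (\<lambda>s. a (lift s)) X' $ r = 0\<^sub>v n' $ r" using r by simp
    qed
    then have "V'.lin_dep S'"
      unfolding V'.lin_dep_def
      apply (intro exI[of _ X'] exI[of _ "\<lambda>s. a (lift s)"] exI[of _ s0])
      using finX' X'sub s0 X(4,5) unfolding X'_def by auto
    then show False using S'(3) by blast
  qed
  have "card T \<le> V.rank A" by (rule V.rank_ge_card_indpt[OF A Tsub indT])
  then show ?thesis using cardT S'(4) by simp
qed


definition colv :: "'a::field mat \<Rightarrow> nat set \<Rightarrow> nat \<Rightarrow> nat \<times> nat \<Rightarrow> 'a vec" where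
  "colv G U L p = vec (card U + L * dim_row G) (\<lambda>r. if r < card U then (if sorted_list_of_set U ! r = snd p then 1 else 0)
     else (if (r - card U) div dim_row G = fst p then G $$ ((r - card U) mod dim_row G, snd p) else 0))"

lemma dim_Hmat: "dim_row (Hmat G U As) = card U + length As * dim_row G"
  "dim_col (Hmat G U As) = length (H_cols U As)"
  unfolding Hmat_def Let_def by simp_all

lemma cols_Hmat: "set (cols (Hmat G U As)) = colv G U (length As) ` set (H_cols U As)"
proof -
  have "set (cols (Hmat G U As)) = (\<lambda>j. col (Hmat G U As) j) ` {..<length (H_cols U As)}"
    unfolding cols_def dim_Hmat by auto
  also have "\<dots> = (\<lambda>j. colv G U (length As) (H_cols U As ! j)) ` {..<length (H_cols U As)}"
  proof (rule image_cong[OF refl])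
    fix j assume j: "j \<in> {..<length (H_cols U As)}"
    obtain i u where iu: "H_cols U As ! j = (i, u)" by fastforce
    show "col (Hmat G U As) j = colv G U (length As) (H_cols U As ! j)"
      using j unfolding Hmat_def Let_def colv_def by (auto simp: iu intro!: eq_vecI)
  qed
  also have "\<dots> = colv G U (length As) ` set (H_cols U As)"
    by (metis image_image list.set_map map_nth set_upt atLeast_upt)
  finally show ?thesis .
qed

lemma set_H_cols: "finite U \<Longrightarrow> set (H_cols U As) = {(i, u). i < length As \<and> u \<in> U - As ! i}"
  unfolding H_cols_def by auto


theorem proposition3p13:
  fixes G :: "'a::{field,finite} mat" and n k :: nat and As :: "nat set list" and B :: "nat set"
  assumes G: "G \<in> carrier_mat k n"
    and gen: "mrank G = k"
    and As: "\<forall>i < length As. As ! i \<subseteq> {0..<n}"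
    and B: "B \<subseteq> (\<Union>i < length As. {0..<n} - As ! i)"
  shows "mrank (Hmat G {0..<n} As)
           \<ge> card B + mrank (Hmat G ({0..<n} - B) (map (\<lambda>A. A - B) As))"
proof -
  define L where "L = length As"
  define U' where "U' = {0..<n} - B"
  define As' where "As' = map (\<lambda>A. A - B) As"
  define H where "H = Hmat G {0..<n} As"
  define H' where "H' = Hmat G U' As'"
  define us' where "us' = sorted_list_of_set U'"
  define m where "m = n + L * k"
  define m' where "m' = card U' + L * k"
  have dk: "dim_row G = k" using G by simp
  have LAs': "length As' = L" unfolding As'_def L_def by simp
  have Bsub: "B \<subseteq> {0..<n}" using B by auto
  have finU': "finite U'" unfolding U'_def by simp
  have lus': "length us' = card U'" unfolding us'_def by simp
  have us'mem: "us' ! r \<in> U'" if "r < card U'" for r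
    using that lus' finU' unfolding us'_def by (metis nth_mem set_sorted_list_of_set lus' us'_def)
  have us'n: "us' ! r < n" if "r < card U'" for r
    using us'mem[OF that] unfolding U'_def by simp
  have sl: "sorted_list_of_set {0..<n} = [0..<n]" by simp
  have HA: "H \<in> carrier_mat m (length (H_cols {0..<n} As))"
    unfolding H_def m_def L_def using dim_Hmat[of G "{0..<n}" As] dk by (intro carrier_matI) auto
  have HA': "H' \<in> carrier_mat m' (length (H_cols U' As'))"
    unfolding H'_def m'_def using dim_Hmat[of G U' As'] dk LAs' by (intro carrier_matI) auto
  define \<rho> where "\<rho> r = (if r < card U' then us' ! r else r - card U' + n)" for r
  have Bm: "B \<subseteq> {..<m}" using Bsub unfolding m_def by auto
  have rho: "\<forall>r<m'. \<rho> r < m"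
    unfolding \<rho>_def m_def m'_def using us'n by (auto simp: trans_less_add1)
  have F1: "\<forall>s\<in>set (cols H'). \<exists>x\<in>set (cols H). (\<forall>b\<in>B. x$b = 0) \<and> (\<forall>r<m'. x $ \<rho> r = s $ r)"
  proof
    fix s assume "s \<in> set (cols H')"
    then obtain i u where iu: "i < L" "u \<in> U' - As' ! i" "s = colv G U' L (i, u)"
      unfolding H'_def cols_Hmat set_H_cols[OF finU'] LAs' by auto
    have iu2: "u \<in> {0..<n} - As ! i" "u \<notin> B" using iu unfolding U'_def As'_def L_def by auto
    define x where "x = colv G {0..<n} L (i, u)"
    have "x \<in> set (cols H)"
      unfolding H_def cols_Hmat set_H_cols[OF finite_atLeastLessThan] x_def L_def
      using iu(1) iu2 L_def by auto
    moreover have "\<forall>b\<in>B. x$b = 0"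
    proof
      fix b assume b: "b \<in> B"
      then have "b < n" using Bsub by auto
      then show "x $ b = 0" unfolding x_def colv_def using iu2(2) b by auto
    qed
    moreover have "\<forall>r<m'. x $ \<rho> r = s $ r"
    proof (intro allI impI)
      fix r assume r: "r < m'"
      show "x $ \<rho> r = s $ r"
      proof (cases "r < card U'")
        case True
        then show ?thesis unfolding x_def iu(3) colv_def \<rho>_def us'_def[symmetric]
          using us'n[OF True] r dk unfolding m'_def by auto
      next
        case False
        then show ?thesis unfolding x_def iu(3) colv_def \<rho>_def
          using r dk unfolding m'_def by auto
      qed
    qed
    ultimately show "\<exists>x\<in>set (cols H). (\<forall>b\<in>B. x$b = 0) \<and> (\<forall>r<m'. x $ \<rho> r = s $ r)" by blast
  qed
  have F2: "\<forall>b\<in>B. \<exists>x\<in>set (cols H). x$b = 1 \<and> (\<forall>b'\<in>B. b' \<noteq> b \<longrightarrow> x$b' = 0)"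
  proof
    fix b assume b: "b \<in> B"
    then obtain i where i: "i < L" "b \<in> {0..<n} - As ! i" using B unfolding L_def by blast
    define x where "x = colv G {0..<n} L (i, b)"
    have "x \<in> set (cols H)"
      unfolding H_def cols_Hmat set_H_cols[OF finite_atLeastLessThan] x_def L_def
      using i L_def by auto
    moreover have "x $ b = 1" using i(2) unfolding x_def colv_def by auto
    moreover have "\<forall>b'\<in>B. b' \<noteq> b \<longrightarrow> x$b' = 0"
    proof (intro ballI impI)
      fix b' assume b': "b' \<in> B" "b' \<noteq> b"
      then have "b' < n" using Bsub by auto
      then show "x $ b' = 0" unfolding x_def colv_def using b' by auto
    qed
    ultimately show "\<exists>x\<in>set (cols H). x$b = 1 \<and> (\<forall>b'\<in>B. b' \<noteq> b \<longrightarrow> x$b' = 0)" by blast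
  qed
  have "card B + vec_space.rank m' H' \<le> vec_space.rank m H"
    by (rule abstract_rank[OF HA HA' Bm rho F1 F2])
  moreover have "dim_row H = m" "dim_row H' = m'" using HA HA' by auto
  ultimately show ?thesis unfolding H_def H'_def As'_def U'_def by simp
qed

end
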